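(* Let $d,n,m\geq1$ be integers, and let $\mathsf{M}_1$ be an $n$-outcome POVM and $\mathsf{M}_2$ an $m$-outcome POVM on $\mathbb{C}^d$, and set $$\bar P(\mathsf{M}_1,\mathsf{M}_2)=\frac{1}{2nm}\sum_{x=1}^n\sum_{y=1}^m\big\|\mathsf{M}_1(x)+\mathsf{M}_2(y)\big\|.$$ Then the incompatibility robustness satisfies $$\mathcal{R}(\mathsf{M}_1,\mathsf{M}_2)\geq\frac{2nm\,\bar P(\mathsf{M}_1,\mathsf{M}_2)}{d+nm}-1.$$
   Context: $\|\cdot\|$ is the operator norm. Two POVMs are compatible if there exists a POVM $\mathsf{G}(x,y)$ with marginals $\sum_y\mathsf{G}(x,y)=$ first POVM and $\sum_x\mathsf{G}(x,y)=$ second POVM. The incompatibility robustness is $\mathcal{R}(\mathsf{M}_1,\mathsf{M}_2)=\min\{t\geq0 : \{(\mathsf{M}_i+t\mathsf{N}_i)/(1+t)\}_{i=1,2}$ are compatible for some POVMs $\mathsf{N}_1$ ($n$ outcomes) and $\mathsf{N}_2$ ($m$ outcomes) on $\mathbb{C}^d\}$. *)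

theory Defs
  imports "HOL-Analysis.Analysis"
begin

text \<open>Operators on C^d are d x d complex matrices, with d = CARD('d).\<close>

definition quad_form :: "complex^'d^'d \<Rightarrow> complex^'d \<Rightarrow> complex" where
  "quad_form A v = (\<Sum>i\<in>UNIV. cnj (v $ i) * ((A *v v) $ i))"

definition psd :: "complex^'d^'d \<Rightarrow> bool" where
  "psd A \<longleftrightarrow> (\<forall>v. Im (quad_form A v) = 0 \<and> Re (quad_form A v) \<ge> 0)"

definition is_POVM :: "('x::finite \<Rightarrow> complex^'d^'d) \<Rightarrow> bool" where
  "is_POVM M \<longleftrightarrow> (\<forall>x. psd (M x)) \<and> (\<Sum>x\<in>UNIV. M x) = mat 1"

definition compatible ::
  "('x::finite \<Rightarrow> complex^'d^'d) \<Rightarrow> ('y::finite \<Rightarrow> complex^'d^'d) \<Rightarrow> bool" where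
  "compatible M1 M2 \<longleftrightarrow>
     (\<exists>G :: 'x \<times> 'y \<Rightarrow> complex^'d^'d. is_POVM G \<and>
        (\<forall>x. (\<Sum>y\<in>UNIV. G (x, y)) = M1 x) \<and> (\<forall>y. (\<Sum>x\<in>UNIV. G (x, y)) = M2 y))"

definition opnorm :: "complex^'d^'d \<Rightarrow> real" where
  "opnorm A = onorm (\<lambda>v::complex^'d. A *v v)"

definition incomp_robustness ::
  "('x::finite \<Rightarrow> complex^'d^'d) \<Rightarrow> ('y::finite \<Rightarrow> complex^'d^'d) \<Rightarrow> real" where
  "incomp_robustness M1 M2 = Inf {t::real. t \<ge> 0 \<and>
     (\<exists>(N1 :: 'x \<Rightarrow> complex^'d^'d) (N2 :: 'y \<Rightarrow> complex^'d^'d).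
        is_POVM N1 \<and> is_POVM N2 \<and>
        compatible (\<lambda>x. (1 / (1 + t)) *\<^sub>R (M1 x + t *\<^sub>R N1 x))
                   (\<lambda>y. (1 / (1 + t)) *\<^sub>R (M2 y + t *\<^sub>R N2 y)))}"

definition avg_Pbar ::
  "('x::finite \<Rightarrow> complex^'d^'d) \<Rightarrow> ('y::finite \<Rightarrow> complex^'d^'d) \<Rightarrow> real" where
  "avg_Pbar M1 M2 = (1 / (2 * real CARD('x) * real CARD('y))) *
     (\<Sum>x\<in>UNIV. \<Sum>y\<in>UNIV. opnorm (M1 x + M2 y))"

end

theory Submission
  imports Defs
begin

definition bil :: "complex^'d::finite^'d \<Rightarrow> complex^'d \<Rightarrow> complex^'d \<Rightarrow> complex" where
  "bil A u v = (\<Sum>i\<in>UNIV. cnj (u $ i) * ((A *v v) $ i))"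

lemma quad_bil: "quad_form A v = bil A v v"
  by (simp add: quad_form_def bil_def)

lemma bil_expand: "bil A u v = (\<Sum>i\<in>UNIV. \<Sum>j\<in>UNIV. cnj (u$i) * A$i$j * v$j)"
  by (simp add: bil_def matrix_vector_mult_def sum_distrib_left mult.assoc)

lemma bil_addl: "bil A (u1 + u2) w = bil A u1 w + bil A u2 w"
  by (simp add: bil_expand sum.distrib algebra_simps)
lemma bil_addr: "bil A w (u1 + u2) = bil A w u1 + bil A w u2"
  by (simp add: bil_expand sum.distrib algebra_simps)
lemma bil_smultl: "bil A (c *s u) w = cnj c * bil A u w"
  by (simp add: bil_expand sum_distrib_left algebra_simps)
lemma bil_smultr: "bil A w (c *s u) = c * bil A w u"
  by (simp add: bil_expand sum_distrib_left algebra_simps)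
lemma bil_madd: "bil (A + B) u v = bil A u v + bil B u v"
  by (simp add: bil_expand sum.distrib algebra_simps)
lemma mscale_comp: "(r *\<^sub>R A) $ i $ j = complex_of_real r * (A $ i $ j :: complex)"
  unfolding vector_scaleR_component by (rule scaleR_conv_of_real)
lemma bil_mscale: "bil (r *\<^sub>R A) u v = of_real r * bil A u v"
  apply (simp add: bil_expand sum_distrib_left)
  apply (simp add: scaleR_conv_of_real algebra_simps)
  done
lemma bil_msum: "finite S \<Longrightarrow> bil (\<Sum>k\<in>S. F k) u v = (\<Sum>k\<in>S. bil (F k) u v)"
  by (induction S rule: finite_induct) (simp add: bil_expand, simp add: bil_madd)
lemma bil_mat1: "bil (mat 1) u v = (\<Sum>i\<in>UNIV. cnj (u$i) * v$i)"
  by (simp add: bil_def)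

lemma norm_sq_bil: "complex_of_real ((norm w)^2) = bil (mat 1) w w"
proof -
  have "(norm w)^2 = (\<Sum>i\<in>UNIV. (cmod (w$i))^2)"
    unfolding norm_vec_def L2_set_def by (rule real_sqrt_pow2) (simp add: sum_nonneg)
  hence "complex_of_real ((norm w)^2) = (\<Sum>i\<in>UNIV. complex_of_real ((cmod (w$i))^2))" by simp
  also have "\<dots> = (\<Sum>i\<in>UNIV. cnj (w$i) * w$i)"
    by (rule sum.cong[OF refl]) (metis complex_norm_square mult.commute of_real_power)
  finally show ?thesis by (simp add: bil_mat1 sum_nonneg)
qed

lemma bil_expand2:
  "bil A (u + c *s v) (u + c *s v) = bil A u u + c * bil A u v + cnj c * bil A v u + cnj c * c * bil A v v"
  by (simp add: bil_addl bil_addr bil_smultl bil_smultr algebra_simps)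

lemma psd_herm:
  assumes "psd A" shows "bil A v u = cnj (bil A u v)"
proof -
  have im: "Im (bil A w w) = 0" for w using assms by (simp add: psd_def quad_bil)
  have e1: "bil A (u + 1 *s v) (u + 1 *s v) = bil A u u + bil A u v + bil A v u + bil A v v"
    using bil_expand2[of A u 1 v] by simp
  have e2: "bil A (u + \<i> *s v) (u + \<i> *s v) = bil A u u + \<i> * bil A u v - \<i> * bil A v u + bil A v v"
    using bil_expand2[of A u \<i> v] by simp
  have "Im (bil A u v + bil A v u) = 0" using im[of "u + 1 *s v"] im[of u] im[of v] e1 by simp
  moreover have "Re (bil A u v - bil A v u) = 0" using im[of "u + \<i> *s v"] im[of u] im[of v] e2 by simp
  ultimately show ?thesis by (simp add: complex_eq_iff)
qed

lemma real_quad_aux: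
  fixes a c B :: real
  assumes "a \<ge> 0" "c \<ge> 0" "B \<ge> 0" "\<And>z. a - 2*z*B + z^2*B*c \<ge> 0"
  shows "B \<le> a * c"
proof (cases "B = 0")
  case True then show ?thesis using assms by simp
next
  case False
  show ?thesis
  proof (cases "c = 0")
    case True
    have "a - 2*((a+1)/(2*B))*B + ((a+1)/(2*B))^2*B*c \<ge> 0" by (rule assms(4))
    with True False show ?thesis by (simp add: field_simps)
  next
    case False
    have "a - 2*(1/c)*B + (1/c)^2*B*c \<ge> 0" by (rule assms(4))
    with False assms(2) have "a - B/c \<ge> 0" by (simp add: field_simps power2_eq_square)
    with False assms(2) show ?thesis by (simp add: field_simps)
  qed
qed

lemma psd_CS:
  assumes "psd A"
  shows "(cmod (bil A u v))^2 \<le> Re (bil A u u) * Re (bil A v v)"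
proof -
  define \<beta> where "\<beta> = bil A u v"
  have im: "Im (bil A w w) = 0" and re: "Re (bil A w w) \<ge> 0" for w
    using assms by (simp_all add: psd_def quad_bil)
  have H: "bil A v u = cnj \<beta>" unfolding \<beta>_def by (rule psd_herm[OF assms])
  have key: "Re (bil A u u) - 2*z*(cmod \<beta>)^2 + z^2*(cmod \<beta>)^2*Re (bil A v v) \<ge> 0" for z :: real
  proof -
    define c where "c = - (complex_of_real z) * cnj \<beta>"
    have e0: "bil A (u + c *s v) (u + c *s v) = bil A u u + c * \<beta> + cnj c * cnj \<beta> + cnj c * c * bil A v v"
      using bil_expand2[of A u c v] H \<beta>_def by simp
    have n: "\<beta> * cnj \<beta> = complex_of_real ((cmod \<beta>)^2)"
      by (metis complex_norm_square of_real_power)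
    have c1: "c * \<beta> = - complex_of_real (z * (cmod \<beta>)^2)"
    proof -
      have "c * \<beta> = - complex_of_real z * (\<beta> * cnj \<beta>)" by (simp add: c_def)
      thus ?thesis by (simp only: n of_real_mult) simp
    qed
    have c2: "cnj c * cnj \<beta> = - complex_of_real (z * (cmod \<beta>)^2)"
    proof -
      have "cnj c * cnj \<beta> = - complex_of_real z * (\<beta> * cnj \<beta>)" by (simp add: c_def)
      thus ?thesis by (simp only: n of_real_mult) simp
    qed
    have c3: "cnj c * c = complex_of_real (z^2 * (cmod \<beta>)^2)"
    proof -
      have "cnj c * c = complex_of_real (z^2) * (\<beta> * cnj \<beta>)" by (simp add: c_def power2_eq_square)
      thus ?thesis by (simp only: n of_real_mult)
    qed
    have e1: "bil A u u + c * \<beta> + cnj c * cnj \<beta> + cnj c * c * bil A v v = bil A u u - 2 * complex_of_real (z * (cmod \<beta>)^2) + complex_of_real (z^2 * (cmod \<beta>)^2) * bil A v v"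
      by (simp only: c1 c2 c3) simp
    have "Re (bil A (u + c *s v) (u + c *s v)) = Re (bil A u u) - 2*z*(cmod \<beta>)^2 + z^2*(cmod \<beta>)^2*Re (bil A v v)"
      unfolding e0 e1 by simp
    with re[of "u + c *s v"] show ?thesis by linarith
  qed
  have "(cmod \<beta>)^2 \<le> Re (bil A u u) * Re (bil A v v)"
    by (rule real_quad_aux[OF re re zero_le_power2 key])
  thus ?thesis by (simp add: \<beta>_def)
qed


lemma bil_herm_self: "bil (mat 1) w w = complex_of_real ((norm w)^2)"
  by (rule norm_sq_bil[symmetric])

lemma psd_mat1: "psd (mat 1 :: complex^'d::finite^'d)"
  by (simp add: psd_def quad_bil bil_herm_self)

lemma real_aux2:
  fixes a b K :: real
  assumes "a \<ge> 0" "b \<ge> 0" "K \<ge> 0" "(a^2)^2 \<le> (K * a^2) * (K * b^2)"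
  shows "a \<le> K * b"
proof (cases "a = 0")
  case True then show ?thesis using assms by simp
next
  case False
  have "a^2 > 0" using assms False by simp
  have eq1: "(a^2)^2 = a^2*a^2" by (rule power2_eq_square)
  have eq2: "(K * a^2) * (K * b^2) = a^2*(K*b)^2" by algebra
  have h: "a^2*a^2 \<le> a^2*(K*b)^2" using assms(4) by (metis eq1 eq2)
  have "a^2 \<le> (K*b)^2" using h \<open>a^2>0\<close> by (simp only: mult_le_cancel_left_pos)
  thus ?thesis using assms by (meson mult_nonneg_nonneg power2_le_imp_le)
qed

lemma psd_bound:
  assumes "psd P" "K \<ge> 0" "\<And>v. Re (bil P v v) \<le> K * (norm v)^2"
  shows "norm (P *v v) \<le> K * norm v"
proof -
  define w where "w = P *v v"
  have "bil P w v = bil (mat 1) w w" by (simp add: bil_def w_def)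
  also have "\<dots> = complex_of_real ((norm w)^2)" by (rule bil_herm_self)
  finally have e: "cmod (bil P w v) = (norm w)^2" by (simp only: norm_of_real abs_power2)
  have "((norm w)^2)^2 \<le> Re (bil P w w) * Re (bil P v v)"
    using psd_CS[OF assms(1), of w v] e by simp
  also have "\<dots> \<le> (K * (norm w)^2) * (K * (norm v)^2)"
  proof (rule mult_mono)
    show "0 \<le> K * (norm w)^2" using assms(2) by simp
    show "0 \<le> Re (bil P v v)" using assms(1) by (simp add: psd_def quad_bil)
  qed (use assms(3) in auto)
  finally have "norm w \<le> K * norm v" by (rule real_aux2[rotated 3]) (simp_all add: assms(2))
  thus ?thesis by (simp add: w_def)
qed

definition tr :: "complex^'d::finite^'d \<Rightarrow> real" where
  "tr A = (\<Sum>i\<in>UNIV. Re (A $ i $ i))"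

lemma mv_axis: "(A *v axis j 1) $ i = A $ i $ (j::'n::finite)" for A :: "complex^'n^'m"
proof -
  have "\<And>k. A$i$k * (axis j 1)$k = (if k = j then A$i$j else 0)" by (simp add: axis_def)
  thus ?thesis by (simp add: matrix_vector_mult_def)
qed

lemma bil_axis_left: "bil A (axis i 1) v = (A *v v) $ i"
proof -
  have "\<And>k. cnj (axis i 1 $ k) * (A *v v)$k = (if k = i then (A *v v)$i else 0)" by (simp add: axis_def)
  thus ?thesis by (simp add: bil_def)
qed

lemma bil_axis_both: "bil A (axis i 1) (axis i 1) = A $ i $ i"
  by (simp add: bil_axis_left mv_axis)

lemma tr_nonneg: "psd A \<Longrightarrow> tr A \<ge> 0"
  unfolding tr_def
  by (rule sum_nonneg) (metis bil_axis_both psd_def quad_bil)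

lemma norm_sq_sum: "(norm (w::complex^'d::finite))^2 = (\<Sum>i\<in>UNIV. (cmod (w$i))^2)"
  unfolding norm_vec_def L2_set_def by (rule real_sqrt_pow2) (simp add: sum_nonneg)

lemma psd_trace:
  assumes "psd G"
  shows "Re (bil G v v) \<le> tr G * (norm v)^2"
proof -
  define q where "q = Re (bil G v v)"
  have q0: "q \<ge> 0" using assms by (simp add: psd_def quad_bil q_def)
  have "(cmod ((G *v v) $ i))^2 \<le> Re (G $ i $ i) * q" for i
    using psd_CS[OF assms, of "axis i 1" v] by (simp add: bil_axis_left mv_axis q_def)
  hence "(\<Sum>i\<in>UNIV. (cmod ((G *v v) $ i))^2) \<le> (\<Sum>i\<in>UNIV. Re (G $ i $ i) * q)"
    by (rule sum_mono)
  hence g: "(norm (G *v v))^2 \<le> tr G * q" by (simp add: norm_sq_sum tr_def sum_distrib_right)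
  have "bil G v v = bil (mat 1) v (G *v v)" by (simp add: bil_def)
  hence "(cmod (bil G v v))^2 \<le> (norm v)^2 * (norm (G *v v))^2"
    using psd_CS[OF psd_mat1, of v "G *v v"] by (simp add: bil_herm_self)
  moreover have "q^2 \<le> (cmod (bil G v v))^2"
    using q0 unfolding q_def by (intro power_mono complex_Re_le_cmod)
  ultimately have "q^2 \<le> (norm v)^2 * (tr G * q)"
    using g by (meson mult_left_mono order_trans zero_le_power2)
  hence "q * q \<le> q * ((norm v)^2 * tr G)" by (simp add: power2_eq_square algebra_simps)
  hence "q \<le> (norm v)^2 * tr G \<or> q = 0" using q0 by (metis mult_le_cancel_left_pos order_le_less)
  thus ?thesis using tr_nonneg[OF assms] by (auto simp: q_def mult.commute)
qed


abbreviation Q :: "complex^'d::finite^'d \<Rightarrow> complex^'d \<Rightarrow> real" where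
  "Q A v \<equiv> Re (bil A v v)"

lemma bil_mdiff: "bil (A - B) u v = bil A u v - bil B u v"
  by (simp add: bil_expand sum_subtractf algebra_simps)

lemma psd_iff: "psd A \<longleftrightarrow> (\<forall>v. Im (bil A v v) = 0 \<and> Q A v \<ge> 0)"
  by (simp add: psd_def quad_bil)

lemma psd_add: "psd A \<Longrightarrow> psd B \<Longrightarrow> psd (A + B)"
  by (simp add: psd_iff bil_madd)

lemma Q_sum: "finite S \<Longrightarrow> Q (\<Sum>k\<in>S. F k) v = (\<Sum>k\<in>S. Q (F k) v)"
  by (simp add: bil_msum Re_sum)

lemma Q_mat1: "Q (mat 1) v = (norm v)^2"
  by (simp add: bil_herm_self)

lemma opnorm_le:
  assumes "psd P" "K \<ge> 0" "\<And>v. Q P v \<le> K * (norm v)^2"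
  shows "opnorm P \<le> K"
  unfolding opnorm_def by (rule onorm_le) (rule psd_bound[OF assms])

lemma tr_sum: "finite S \<Longrightarrow> tr (\<Sum>k\<in>S. F k) = (\<Sum>k\<in>S. tr (F k))"
  unfolding tr_def by (simp add: sum_component Re_sum) (rule sum.swap)

lemma tr_mat1: "tr (mat 1 :: complex^'d::finite^'d) = real CARD('d)"
  by (simp add: tr_def mat_def)

lemma comb:
  fixes g :: "'x::finite \<times> 'y::finite \<Rightarrow> real"
  assumes "\<And>p. g p \<ge> 0"
  shows "(\<Sum>y'\<in>UNIV. g (x, y')) + (\<Sum>x'\<in>UNIV. g (x', y)) \<le> g (x, y) + (\<Sum>p\<in>UNIV. g p)"
proof -
  have "(\<Sum>p\<in>UNIV. g p) = (\<Sum>x'\<in>UNIV. \<Sum>y'\<in>UNIV. g (x', y'))"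
    by (simp add: sum.cartesian_product)
  also have "\<dots> = (\<Sum>y'\<in>UNIV. g (x, y')) + (\<Sum>x'\<in>UNIV-{x}. \<Sum>y'\<in>UNIV. g (x', y'))"
    by (rule sum.remove) simp_all
  finally have e1: "(\<Sum>p\<in>UNIV. g p) = (\<Sum>y'\<in>UNIV. g (x, y')) + (\<Sum>x'\<in>UNIV-{x}. \<Sum>y'\<in>UNIV. g (x', y'))" .
  have "(\<Sum>x'\<in>UNIV-{x}. g (x', y)) \<le> (\<Sum>x'\<in>UNIV-{x}. \<Sum>y'\<in>UNIV. g (x', y'))"
  proof (rule sum_mono)
    fix x' show "g (x', y) \<le> (\<Sum>y'\<in>UNIV. g (x', y'))"
      by (rule member_le_sum) (auto simp: assms)
  qed
  moreover have "(\<Sum>x'\<in>UNIV. g (x', y)) = g (x, y) + (\<Sum>x'\<in>UNIV-{x}. g (x', y))"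
    by (rule sum.remove) simp_all
  ultimately show ?thesis using e1 by linarith
qed

lemma main_bound:
  fixes M1 :: "'x::finite \<Rightarrow> complex^'d::finite^'d"
    and M2 :: "'y::finite \<Rightarrow> complex^'d^'d"
    and N1 :: "'x \<Rightarrow> complex^'d^'d" and N2 :: "'y \<Rightarrow> complex^'d^'d"
  assumes P1: "is_POVM M1" and P2: "is_POVM M2" and t: "t \<ge> 0"
    and PN1: "is_POVM N1" and PN2: "is_POVM N2"
    and C: "compatible (\<lambda>x. (1 / (1 + t)) *\<^sub>R (M1 x + t *\<^sub>R N1 x))
                   (\<lambda>y. (1 / (1 + t)) *\<^sub>R (M2 y + t *\<^sub>R N2 y))"
  shows "(\<Sum>x\<in>UNIV. \<Sum>y\<in>UNIV. opnorm (M1 x + M2 y))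
           \<le> (1 + t) * (real CARD('d) + real CARD('x) * real CARD('y))"
proof -
  obtain G :: "'x \<times> 'y \<Rightarrow> complex^'d^'d" where PG: "is_POVM G"
    and m1: "\<And>x. (\<Sum>y\<in>UNIV. G (x, y)) = (1 / (1 + t)) *\<^sub>R (M1 x + t *\<^sub>R N1 x)"
    and m2: "\<And>y. (\<Sum>x\<in>UNIV. G (x, y)) = (1 / (1 + t)) *\<^sub>R (M2 y + t *\<^sub>R N2 y)"
    using C unfolding compatible_def by blast
  have psdG: "psd (G p)" for p using PG unfolding is_POVM_def by (cases p) auto
  have QG: "Q (G p) v \<ge> 0" for p v using psdG[of p] by (simp add: psd_iff)
  have QGsum: "(\<Sum>p\<in>UNIV. Q (G p) v) = (norm v)^2" for v
  proof -
    have "(\<Sum>p\<in>UNIV. G p) = mat 1" using PG by (simp add: is_POVM_def)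
    hence "Q (\<Sum>p\<in>UNIV. G p) v = (norm v)^2" by (simp add: Q_mat1)
    thus ?thesis by (simp add: Q_sum)
  qed
  have psdM1: "psd (M1 x)" for x using P1 by (simp add: is_POVM_def)
  have psdM2: "psd (M2 y)" for y using P2 by (simp add: is_POVM_def)
  have psdN1: "psd (N1 x)" for x using PN1 by (simp add: is_POVM_def)
  have psdN2: "psd (N2 y)" for y using PN2 by (simp add: is_POVM_def)
  have rowb: "Q (M1 x) v \<le> (1 + t) * (\<Sum>y'\<in>UNIV. Q (G (x, y')) v)" for x v
  proof -
    have "(\<Sum>y'\<in>UNIV. Q (G (x, y')) v) = Q ((1 / (1 + t)) *\<^sub>R (M1 x + t *\<^sub>R N1 x)) v"
      by (simp add: Q_sum[symmetric] m1)
    also have "\<dots> = (1 / (1 + t)) * (Q (M1 x) v + t * Q (N1 x) v)"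
      by (simp add: bil_mscale bil_madd)
    finally have e: "(1 + t) * (\<Sum>y'\<in>UNIV. Q (G (x, y')) v) = Q (M1 x) v + t * Q (N1 x) v"
      using t by simp
    have "t * Q (N1 x) v \<ge> 0" using t psdN1[of x] by (simp add: psd_iff)
    thus ?thesis using e by linarith
  qed
  have colb: "Q (M2 y) v \<le> (1 + t) * (\<Sum>x'\<in>UNIV. Q (G (x', y)) v)" for y v
  proof -
    have "(\<Sum>x'\<in>UNIV. Q (G (x', y)) v) = Q ((1 / (1 + t)) *\<^sub>R (M2 y + t *\<^sub>R N2 y)) v"
      by (simp add: Q_sum[symmetric] m2)
    also have "\<dots> = (1 / (1 + t)) * (Q (M2 y) v + t * Q (N2 y) v)"
      by (simp add: bil_mscale bil_madd)
    finally have e: "(1 + t) * (\<Sum>x'\<in>UNIV. Q (G (x', y)) v) = Q (M2 y) v + t * Q (N2 y) v"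
      using t by simp
    have "t * Q (N2 y) v \<ge> 0" using t psdN2[of y] by (simp add: psd_iff)
    thus ?thesis using e by linarith
  qed
  have each: "opnorm (M1 x + M2 y) \<le> (1 + t) * (1 + tr (G (x, y)))" for x y
  proof (rule opnorm_le)
    show "psd (M1 x + M2 y)" by (rule psd_add[OF psdM1 psdM2])
    show "0 \<le> (1 + t) * (1 + tr (G (x, y)))" using t tr_nonneg[OF psdG] by simp
    fix v
    have "Q (M1 x + M2 y) v = Q (M1 x) v + Q (M2 y) v" by (simp add: bil_madd)
    also have "\<dots> \<le> (1 + t) * ((\<Sum>y'\<in>UNIV. Q (G (x, y')) v) + (\<Sum>x'\<in>UNIV. Q (G (x', y)) v))"
      using rowb[of x v] colb[of y v] by (simp add: distrib_left)
    also have "\<dots> \<le> (1 + t) * (Q (G (x, y)) v + (norm v)^2)"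
      using comb[of "\<lambda>p. Q (G p) v" x y] QG QGsum[of v] t by (intro mult_left_mono) auto
    also have "\<dots> \<le> (1 + t) * (tr (G (x, y)) * (norm v)^2 + (norm v)^2)"
      using psd_trace[OF psdG, of "(x, y)" v] t by (intro mult_left_mono) auto
    also have "\<dots> = (1 + t) * (1 + tr (G (x, y))) * (norm v)^2" by (simp add: algebra_simps)
    finally show "Q (M1 x + M2 y) v \<le> (1 + t) * (1 + tr (G (x, y))) * (norm v)^2" .
  qed
  have "(\<Sum>x\<in>UNIV. \<Sum>y\<in>UNIV. opnorm (M1 x + M2 y)) \<le> (\<Sum>x\<in>UNIV. \<Sum>y\<in>UNIV. (1 + t) * (1 + tr (G (x, y))))"
    by (intro sum_mono each)
  also have "\<dots> = (1 + t) * (real CARD('x) * real CARD('y) + (\<Sum>x\<in>UNIV. \<Sum>y\<in>UNIV. tr (G (x, y))))"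
    by (simp add: sum_distrib_left sum.distrib algebra_simps)
  also have "(\<Sum>x\<in>UNIV. \<Sum>y\<in>UNIV. tr (G (x, y))) = (\<Sum>p\<in>UNIV. tr (G p))"
    by (simp add: sum.cartesian_product)
  also have "\<dots> = tr (\<Sum>p\<in>UNIV. G p)" by (simp add: tr_sum)
  also have "\<dots> = real CARD('d)" using PG by (simp add: is_POVM_def tr_mat1)
  finally show ?thesis by (simp add: algebra_simps)
qed


lemma psd_scale_id: "r \<ge> 0 \<Longrightarrow> psd (r *\<^sub>R (mat 1 :: complex^'d::finite^'d))"
  by (simp add: psd_iff bil_mscale Q_mat1 bil_herm_self)

lemma POVM_elem_le:
  fixes M :: "'x::finite \<Rightarrow> complex^'d::finite^'d"
  assumes "is_POVM M"
  shows "Q (M x) v \<le> (norm v)^2"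
proof -
  have ps: "psd (M x')" for x' using assms by (simp add: is_POVM_def)
  have "Q (M x) v \<le> (\<Sum>x'\<in>UNIV. Q (M x') v)"
    by (rule member_le_sum) (use ps in \<open>auto simp: psd_iff\<close>)
  also have "\<dots> = Q (\<Sum>x'\<in>UNIV. M x') v" by (simp add: Q_sum)
  also have "\<dots> = (norm v)^2" using assms by (simp add: is_POVM_def Q_mat1)
  finally show ?thesis .
qed

lemma smear_POVM:
  fixes M :: "'x::finite \<Rightarrow> complex^'d::finite^'d"
  assumes P: "is_POVM M" and t: "t \<ge> real CARD('x)"
  defines "N \<equiv> \<lambda>x. (1 / t) *\<^sub>R (((1 + t) / real CARD('x)) *\<^sub>R mat 1 - M x)"
  shows "is_POVM N" and "\<And>x. (1 / (1 + t)) *\<^sub>R (M x + t *\<^sub>R N x) = (1 / real CARD('x)) *\<^sub>R mat 1"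
proof -
  define n where "n = real CARD('x)"
  have n0: "n > 0" by (simp add: n_def)
  have t0: "t > 0" using t n0 n_def by linarith
  define c where "c = (1 + t) / n"
  have c1: "c \<ge> 1" using t n0 by (simp add: c_def n_def field_simps)
  have Nx: "N x = (1 / t) *\<^sub>R (c *\<^sub>R mat 1 - M x)" for x by (simp add: N_def c_def n_def)
  have "psd (N x)" for x
  proof -
    have "Im (bil (N x) v v) = 0 \<and> Q (N x) v \<ge> 0" for v
    proof -
      have ps: "psd (M x)" using P by (simp add: is_POVM_def)
      have "Q (M x) v \<le> (norm v)^2" by (rule POVM_elem_le[OF P])
      moreover have "(norm v)^2 \<le> c * (norm v)^2" using mult_right_mono[OF c1 zero_le_power2[of "norm v"]] by simp
      ultimately show ?thesis using ps t0
        by (simp add: Nx bil_mscale bil_mdiff bil_herm_self psd_iff)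
    qed
    thus ?thesis by (simp add: psd_iff)
  qed
  moreover have "(\<Sum>x\<in>UNIV. N x) = mat 1"
  proof -
    have "(\<Sum>x\<in>UNIV. N x) = (1 / t) *\<^sub>R ((n * c) *\<^sub>R mat 1 - (\<Sum>x\<in>UNIV. M x))"
      by (simp add: Nx scaleR_sum_right[symmetric] sum_subtractf n_def sum_constant_scaleR del: sum_constant)
    also have "\<dots> = (1 / t) *\<^sub>R ((1 + t) *\<^sub>R mat 1 - mat 1)"
      using P n0 by (simp add: is_POVM_def c_def)
    also have "\<dots> = (1 / t) *\<^sub>R (t *\<^sub>R mat 1)" by (simp add: algebra_simps)
    also have "\<dots> = mat 1" using t0 by simp
    finally show ?thesis .
  qed
  ultimately show "is_POVM N" by (simp add: is_POVM_def)
  fix x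
  have "M x + t *\<^sub>R N x = c *\<^sub>R mat 1" using t0 by (simp add: Nx)
  thus "(1 / (1 + t)) *\<^sub>R (M x + t *\<^sub>R N x) = (1 / real CARD('x)) *\<^sub>R mat 1"
    using t0 n0 by (simp add: c_def n_def)
qed

lemma trivial_compatible:
  "compatible (\<lambda>x::'x::finite. (1 / real CARD('x)) *\<^sub>R (mat 1 :: complex^'d::finite^'d))
              (\<lambda>y::'y::finite. (1 / real CARD('y)) *\<^sub>R mat 1)"
proof -
  define G :: "'x \<times> 'y \<Rightarrow> complex^'d^'d" where
    "G = (\<lambda>p. (1 / (real CARD('x) * real CARD('y))) *\<^sub>R mat 1)"
  have cp: "CARD('x \<times> 'y) = CARD('x) * CARD('y)"
    by (metis UNIV_Times_UNIV card_cartesian_product)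
  have "(\<Sum>p\<in>UNIV. G p) = real CARD('x \<times> 'y) *\<^sub>R ((1 / (real CARD('x) * real CARD('y))) *\<^sub>R mat 1)"
    unfolding G_def by (rule sum_constant_scaleR)
  also have "\<dots> = mat 1" by (simp only: cp scaleR_scaleR of_nat_mult) simp
  finally have "is_POVM G"
    unfolding is_POVM_def by (auto intro: psd_scale_id simp: G_def)
  moreover have "(\<Sum>y\<in>UNIV. G (x, y)) = (1 / real CARD('x)) *\<^sub>R mat 1" for x
    by (simp add: G_def sum_constant_scaleR del: sum_constant)
  moreover have "(\<Sum>x\<in>UNIV. G (x, y)) = (1 / real CARD('y)) *\<^sub>R mat 1" for y
    by (simp add: G_def sum_constant_scaleR del: sum_constant)
  ultimately show ?thesis unfolding compatible_def by blast
qed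

theorem mainTheorem6:
  fixes M1 :: "'x::finite \<Rightarrow> complex^'d::finite^'d"
    and M2 :: "'y::finite \<Rightarrow> complex^'d^'d"
  assumes "is_POVM M1" and "is_POVM M2"
  shows "incomp_robustness M1 M2 \<ge>
    2 * real CARD('x) * real CARD('y) * avg_Pbar M1 M2
      / (real CARD('d) + real CARD('x) * real CARD('y)) - 1"
proof -
  define S where "S = (\<Sum>x\<in>UNIV. \<Sum>y\<in>UNIV. opnorm (M1 x + M2 y))"
  define D where "D = real CARD('d) + real CARD('x) * real CARD('y)"
  have D0: "D > 0" by (simp add: D_def add_pos_pos)
  have lhs: "2 * real CARD('x) * real CARD('y) * avg_Pbar M1 M2 / D - 1 = S / D - 1"
    by (simp add: avg_Pbar_def S_def)
  define T where "T = {t::real. t \<ge> 0 \<and>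
     (\<exists>(N1 :: 'x \<Rightarrow> complex^'d^'d) (N2 :: 'y \<Rightarrow> complex^'d^'d).
        is_POVM N1 \<and> is_POVM N2 \<and>
        compatible (\<lambda>x. (1 / (1 + t)) *\<^sub>R (M1 x + t *\<^sub>R N1 x))
                   (\<lambda>y. (1 / (1 + t)) *\<^sub>R (M2 y + t *\<^sub>R N2 y)))}"
  have "T \<noteq> {}"
  proof -
    define t0 where "t0 = real CARD('x) + real CARD('y)"
    have a: "t0 \<ge> real CARD('x)" "t0 \<ge> real CARD('y)" "t0 \<ge> 0" by (simp_all add: t0_def)
    note s1 = smear_POVM[OF assms(1) a(1)] and s2 = smear_POVM[OF assms(2) a(2)]
    define N1' where "N1' = (\<lambda>x. (1 / t0) *\<^sub>R (((1 + t0) / real CARD('x)) *\<^sub>R mat 1 - M1 x))"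
    define N2' where "N2' = (\<lambda>x. (1 / t0) *\<^sub>R (((1 + t0) / real CARD('y)) *\<^sub>R mat 1 - M2 x))"
    have c: "compatible (\<lambda>x. (1 / (1 + t0)) *\<^sub>R (M1 x + t0 *\<^sub>R N1' x))
                   (\<lambda>y. (1 / (1 + t0)) *\<^sub>R (M2 y + t0 *\<^sub>R N2' y))"
      unfolding N1'_def N2'_def by (simp only: s1(2) s2(2)) (rule trivial_compatible)
    have "t0 \<in> T" unfolding T_def
      using a(3) s1(1) s2(1) c unfolding N1'_def[symmetric] N2'_def[symmetric] by blast
    thus ?thesis by blast
  qed
  moreover have "S / D - 1 \<le> t" if "t \<in> T" for t
  proof -
    from that obtain N1 N2 where "t \<ge> 0" "is_POVM N1" "is_POVM N2"
      "compatible (\<lambda>x. (1 / (1 + t)) *\<^sub>R (M1 x + t *\<^sub>R N1 x))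
                   (\<lambda>y. (1 / (1 + t)) *\<^sub>R (M2 y + t *\<^sub>R N2 y))"
      unfolding T_def by blast
    from main_bound[OF assms this] have "S \<le> (1 + t) * D" by (simp add: S_def D_def)
    thus ?thesis using D0 by (simp add: field_simps)
  qed
  ultimately have i: "S / D - 1 \<le> Inf T" by (rule cInf_greatest)
  have l2: "2 * real CARD('x) * real CARD('y) * avg_Pbar M1 M2
      / (real CARD('d) + real CARD('x) * real CARD('y)) - 1 = S / D - 1"
    using lhs by (simp add: D_def)
  show ?thesis unfolding incomp_robustness_def T_def[symmetric] l2 by (rule i)
qed

end
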